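(* Let $K$ be an algebraically closed field of characteristic zero, $\mathcal{K} = K(t)$, and fix integers $d \ge 2$ and $N \ge 1$. Then $0$ does not realize portrait $(1,N)$ for $f_d(z) = z^d+t$.
   Context: For $c \in K$, let $f_{d,c}(z) = z^d+c$. A point $x$ has preperiodic portrait $(M,N)$ for $\phi$ if $M\ge0$ is minimal with $\phi^M(x)$ periodic and $\phi^M(x)$ has exact period $N$. We say $\alpha\in\mathcal{K}$ realizes portrait $(M,N)$ for $f_d$ if there exists $c \in K$ such that $\alpha(c)$ (reduction modulo the place $t=c$) has portrait $(M,N)$ for $f_{d,c}$. *)

theory Defs
  imports "HOL-Computational_Algebra.Computational_Algebra"
begin

definition is_periodic :: "('a \<Rightarrow> 'a) \<Rightarrow> 'a \<Rightarrow> bool" where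
  "is_periodic f x \<longleftrightarrow> (\<exists>n\<ge>1. (f ^^ n) x = x)"

definition exact_period :: "('a \<Rightarrow> 'a) \<Rightarrow> 'a \<Rightarrow> nat \<Rightarrow> bool" where
  "exact_period f x N \<longleftrightarrow> N \<ge> 1 \<and> (f ^^ N) x = x \<and> (\<forall>n. 1 \<le> n \<and> n < N \<longrightarrow> (f ^^ n) x \<noteq> x)"

definition has_portrait :: "('a \<Rightarrow> 'a) \<Rightarrow> 'a \<Rightarrow> nat \<Rightarrow> nat \<Rightarrow> bool" where
  "has_portrait f x M N \<longleftrightarrow>
     is_periodic f ((f ^^ M) x) \<and> (\<forall>m<M. \<not> is_periodic f ((f ^^ m) x)) \<and>
     exact_period f ((f ^^ M) x) N"

definition fdc :: "nat \<Rightarrow> 'a::field \<Rightarrow> 'a \<Rightarrow> 'a" where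
  "fdc d c z = z ^ d + c"

text \<open>Reduction of alpha in K(t) modulo the place t = c: write alpha = p/q in lowest terms;
  the reduction is defined (finite) iff q(c) is nonzero, and equals p(c)/q(c).\<close>
definition reduces_at :: "'a::field_gcd poly fract \<Rightarrow> 'a \<Rightarrow> 'a \<Rightarrow> bool" where
  "reduces_at \<alpha> c v \<longleftrightarrow> (case quot_of_fract \<alpha> of (p, q) \<Rightarrow> poly q c \<noteq> 0 \<and> v = poly p c / poly q c)"

definition realizes :: "'a::field_gcd poly fract \<Rightarrow> nat \<Rightarrow> nat \<Rightarrow> nat \<Rightarrow> bool" where
  "realizes \<alpha> d M N \<longleftrightarrow> (\<exists>c v. reduces_at \<alpha> c v \<and> has_portrait (fdc d c) v M N)"

definition alg_closed :: "'a::field itself \<Rightarrow> bool" where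
  "alg_closed _ \<longleftrightarrow> (\<forall>p :: 'a poly. degree p \<ge> 1 \<longrightarrow> (\<exists>x. poly p x = 0))"

end

theory Submission
  imports Defs
begin

lemma red0: "reduces_at (0 :: 'a::field_gcd poly fract) c v \<Longrightarrow> v = 0"
  by (simp add: reduces_at_def)

theorem corollary3p5:
  assumes "alg_closed TYPE('a::{field_char_0,field_gcd})"
    and "d \<ge> 2" and "N \<ge> 1"
  shows "\<not> realizes (0 :: 'a poly fract) d 1 N"
proof
  assume "realizes (0 :: 'a poly fract) d 1 N"
  then obtain c :: 'a and v where r: "reduces_at 0 c v" and h: "has_portrait (fdc d c) v 1 N"
    unfolding realizes_def by blast
  have v: "v = 0" using red0[OF r] .
  let ?f = "fdc d c"
  from h v have per: "is_periodic ?f (?f 0)" and np: "\<not> is_periodic ?f 0"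
    unfolding has_portrait_def by auto
  have f0: "?f 0 = c" using assms(2) by (simp add: fdc_def)
  from per obtain n where n: "n \<ge> 1" "(?f ^^ n) c = c"
    unfolding is_periodic_def f0 by blast
  have "(?f ^^ n) c = ?f ((?f ^^ (n-1)) c)"
    using n(1) by (metis Suc_diff_1 comp_apply funpow.simps(2) less_le_trans zero_less_one)
  hence "((?f ^^ (n-1)) c) ^ d + c = c" using n by (simp add: fdc_def)
  hence z: "(?f ^^ (n-1)) c = 0" by simp
  have "(?f ^^ n) 0 = (?f ^^ (n-1)) (?f 0)"
    using n(1) by (metis Suc_diff_1 funpow_Suc_right comp_apply less_le_trans zero_less_one)
  also have "?f 0 = c" using assms(2) by (simp add: fdc_def)
  finally have "(?f ^^ n) 0 = 0" using z by simp
  with n(1) np show False unfolding is_periodic_def by blast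
qed

end
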